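(* Let $q$ be a prime power and let $\mathcal{F}=(\mathcal{F}_1,\ldots,\mathcal{F}_r)$ be a flag of type $(t_1,\ldots,t_r)$ on $\mathbb{F}_{q^n}$. Assume $m$ is a divisor of $n$ with $m=t_i$ for some $i\in\{1,\ldots,r\}$. If $|\mathrm{Orb}(\mathcal{F})|=\frac{q^n-1}{q^m-1}$, then $m=t_1$, the code $\mathrm{Orb}(\mathcal{F}_1)$ equals $\mathrm{Orb}(\mathbb{F}_{q^m})=\{\mathbb{F}_{q^m}\gamma:\gamma\in\mathbb{F}_{q^n}^*\}$ (the $m$-spread of $\mathbb{F}_{q^n}$ formed by the multiplicative translates of the subfield $\mathbb{F}_{q^m}$), and $m$ divides $t_j$ for every $j\in\{1,\ldots,r\}$.
   Context: $\mathbb{F}_{q^n}$ is regarded as an $\mathbb{F}_q$-vector space. A flag of type $(t_1,\ldots,t_r)$ on $\mathbb{F}_{q^n}$ is a sequence $(\mathcal{F}_1,\ldots,\mathcal{F}_r)$ of $\mathbb{F}_q$-subspaces with $\{0\}\subsetneq\mathcal{F}_1\subsetneq\cdots\subsetneq\mathcal{F}_r\subsetneq\mathbb{F}_{q^n}$ and $\dim_{\mathbb{F}_q}\mathcal{F}_i=t_i$. For $\gamma\in\mathbb{F}_{q^n}^*$, $\mathcal{U}\gamma=\{u\gamma:u\in\mathcal{U}\}$ and $\mathcal{F}\gamma=(\mathcal{F}_1\gamma,\ldots,\mathcal{F}_r\gamma)$. The cyclic orbit codes are $\mathrm{Orb}(\mathcal{U})=\{\mathcal{U}\gamma:\gamma\in\mathbb{F}_{q^n}^*\}$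 and $\mathrm{Orb}(\mathcal{F})=\{\mathcal{F}\gamma:\gamma\in\mathbb{F}_{q^n}^*\}$. An $m$-spread of $\mathbb{F}_{q^n}$ is a set of $m$-dimensional $\mathbb{F}_q$-subspaces that pairwise intersect in $\{0\}$ and whose union is $\mathbb{F}_{q^n}$. *)

theory Defs
  imports "HOL-Algebra.Embedded_Algebras" "HOL-Computational_Algebra.Primes"
begin

text \<open>The ambient field F_(q^n) is a finite field R (HOL-Algebra record) containing a subfield K
  with card K = q and dimension n over K.  F_q-subspaces are subalgebra K V R, and
  dim_(F_q) V = t is ring.dimension R t K V.\<close>

definition translate :: "('a, 'b) ring_scheme \<Rightarrow> 'a set \<Rightarrow> 'a \<Rightarrow> 'a set" where
  "translate R U \<gamma> = (\<lambda>u. u \<otimes>\<^bsub>R\<^esub> \<gamma>) ` U"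

definition orb :: "('a, 'b) ring_scheme \<Rightarrow> 'a set \<Rightarrow> 'a set set" where
  "orb R U = {translate R U \<gamma> | \<gamma>. \<gamma> \<in> carrier R - {\<zero>\<^bsub>R\<^esub>}}"

definition flag_orb :: "('a, 'b) ring_scheme \<Rightarrow> 'a set list \<Rightarrow> 'a set list set" where
  "flag_orb R Fs = {map (\<lambda>U. translate R U \<gamma>) Fs | \<gamma>. \<gamma> \<in> carrier R - {\<zero>\<^bsub>R\<^esub>}}"

definition is_flag :: "('a, 'b) ring_scheme \<Rightarrow> 'a set \<Rightarrow> 'a set list \<Rightarrow> nat list \<Rightarrow> bool" where
  "is_flag R K Fs ts \<longleftrightarrow>
     length Fs = length ts \<and> Fs \<noteq> [] \<and>
     (\<forall>i < length Fs. subalgebra K (Fs ! i) R \<and> ring.dimension R (ts ! i) K (Fs ! i)) \<and>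
     {\<zero>\<^bsub>R\<^esub>} \<subset> Fs ! 0 \<and>
     (\<forall>i. Suc i < length Fs \<longrightarrow> Fs ! i \<subset> Fs ! Suc i) \<and>
     last Fs \<subset> carrier R"

end

theory Submission
  imports Defs
begin


lemma fiber_count:
  assumes "finite G" and "\<And>x. x \<in> G \<Longrightarrow> card {y\<in>G. f y = f x} = c"
  shows "card G = card (f ` G) * c"
proof -
  have U: "G = (\<Union>z\<in>f ` G. {y\<in>G. f y = z})" by auto
  have "card G = (\<Sum>z\<in>f ` G. card {y\<in>G. f y = z})"
    by (subst U, rule card_UN_disjoint) (use assms(1) in auto)
  also have "\<dots> = (\<Sum>z\<in>f ` G. c)"
    by (rule sum.cong) (use assms(2) in auto)
  finally show ?thesis by simp
qed

context ring begin

lemma line_ext_card: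
  assumes F: "subfield F R" and E: "subalgebra F E R" and v: "v \<in> carrier R" "v \<notin> E"
    and fin: "finite (carrier R)"
  shows "card (line_extension F v E) = card F * card E"
proof -
  have Fc: "F \<subseteq> carrier R" using subfieldE(3)[OF F] .
  have Ec: "E \<subseteq> carrier R" using subalgebra_in_carrier[OF E] .
  have img: "line_extension F v E = (\<lambda>(k,e). k \<otimes> v \<oplus> e) ` (F \<times> E)"
    unfolding line_extension_mem_iff set_eq_iff by auto
  have inj: "inj_on (\<lambda>(k,e). k \<otimes> v \<oplus> e) (F \<times> E)"
  proof (rule inj_onI, clarify)
    fix k e k' e' assume k: "k \<in> F" "k' \<in> F" and e: "e \<in> E" "e' \<in> E"
      and eq: "k \<otimes> v \<oplus> e = k' \<otimes> v \<oplus> e'"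
    have kc: "k \<in> carrier R" "k' \<in> carrier R" using k Fc by auto
    have ec: "e \<in> carrier R" "e' \<in> carrier R" using e Ec by auto
    have eq2: "(k \<ominus> k') \<otimes> v = e' \<ominus> e"
    proof -
      have "(k \<ominus> k') \<otimes> v = (k \<otimes> v \<oplus> e) \<ominus> (k' \<otimes> v \<oplus> e) " using kc ec v by algebra
      also have "\<dots> = (k' \<otimes> v \<oplus> e') \<ominus> (k' \<otimes> v \<oplus> e)" using eq by simp
      also have "\<dots> = e' \<ominus> e" using kc ec v by algebra
      finally show ?thesis .
    qed
    have kk: "k = k'"
    proof (rule ccontr)
      assume ne: "k \<noteq> k'"
      have cF: "k \<ominus> k' \<in> F" using k subringE(5,7)[OF subfieldE(1)[OF F]] unfolding a_minus_def by auto
      have c0: "k \<ominus> k' \<noteq> \<zero>" using ne kc by (metis r_right_minus_eq)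
      have "e' \<ominus> e \<in> E" using e subalgebra.axioms(1)[OF E]
        by (simp add: a_minus_def additive_subgroup.a_subset additive_subgroup.a_closed additive_subgroup.a_inv_closed additive_subgroup_def)
      hence "inv (k \<ominus> k') \<otimes> ((k \<ominus> k') \<otimes> v) \<in> E"
        using eq2 subalgebra.smult_closed[OF E] subfield_m_inv(1)[OF F, of "k \<ominus> k'"] cF c0 by auto
      moreover have "inv (k \<ominus> k') \<otimes> ((k \<ominus> k') \<otimes> v) = v"
      proof -
        have i: "inv (k \<ominus> k') \<in> carrier R" "k \<ominus> k' \<in> carrier R"
          using subfield_m_inv(1)[OF F, of "k \<ominus> k'"] cF c0 Fc by auto
        have "inv (k \<ominus> k') \<otimes> ((k \<ominus> k') \<otimes> v) = (inv (k \<ominus> k') \<otimes> (k \<ominus> k')) \<otimes> v"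
          using i v by (simp add: m_assoc)
        also have "\<dots> = v" using subfield_m_inv(3)[OF F, of "k \<ominus> k'"] cF c0 v by simp
        finally show ?thesis .
      qed
      ultimately show False using v by simp
    qed
    show "k = k' \<and> e = e'" using kk eq kc ec v by simp
  qed
  have "finite F" "finite E" using Fc Ec fin finite_subset by auto
  show ?thesis unfolding img card_image[OF inj] card_cartesian_product ..
qed

lemma line_ext_subalgebra:
  assumes F: "subfield F R" and E: "subalgebra F E R" and v: "v \<in> carrier R"
  shows "subalgebra F (line_extension F v E) R"
proof -
  have Ec: "E \<subseteq> carrier R" using subalgebra_in_carrier[OF E] .
  show ?thesis
  proof (rule subalgebra.intro)
    show "subgroup (line_extension F v E) (add_monoid R)"
      by (rule line_extension_is_subgroup[OF F subalgebra.axioms(1)[OF E] v])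
    show "subalgebra_axioms F (line_extension F v E) R"
      unfolding subalgebra_axioms_def
      using line_extension_smult_closed[OF F subalgebra.smult_closed[OF E] Ec v] by blast
  qed
qed

lemma dim_card:
  assumes F: "subfield F R" and fin: "finite (carrier R)" and d: "dimension d F V"
  shows "card V = card F ^ d"
  using d F
proof (induction d F V rule: dimension.induct)
  case (zero_dim K) then show ?case by simp
next
  case (Suc_dim v E n K)
  have "subalgebra K E R"
    using finite_dimension_imp_subalgebra[OF Suc_dim.prems finite_dimensionI[OF Suc_dim.hyps(3)]] .
  then show ?case using line_ext_card[OF Suc_dim.prems _ Suc_dim.hyps(1,2) fin] Suc_dim.IH Suc_dim.prems by simp
qed

lemma exists_dim_aux:
  assumes F: "subfield F R" and fin: "finite (carrier R)" and V: "subalgebra F V R"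
  shows "\<forall>E e. card V - card E = k \<longrightarrow> subalgebra F E R \<longrightarrow> E \<subseteq> V \<longrightarrow> dimension e F E
     \<longrightarrow> (\<exists>d. dimension d F V)"
proof (induction k rule: less_induct)
  case (less k)
  show ?case
  proof (intro allI impI)
    fix E e assume k: "card V - card E = k" and E: "subalgebra F E R" and EV: "E \<subseteq> V"
      and e: "dimension e F E"
    have Vc: "V \<subseteq> carrier R" using subalgebra_in_carrier[OF V] .
    have finV: "finite V" using Vc fin finite_subset by auto
    show "\<exists>d. dimension d F V"
    proof (cases "E = V")
      case True then show ?thesis using e by auto
    next
      case False
      then obtain a where a: "a \<in> V" "a \<notin> E" using EV by auto
      have ac: "a \<in> carrier R" using a Vc by auto
      define E' where "E' = line_extension F a E"
      have E'sub: "subalgebra F E' R" unfolding E'_def by (rule line_ext_subalgebra[OF F E ac])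
      have e': "dimension (Suc e) F E'" unfolding E'_def by (rule Suc_dim[OF ac a(2) e])
      have Fc: "F \<subseteq> carrier R" using subfieldE(3)[OF F] .
      have Ec: "E \<subseteq> carrier R" using subalgebra_in_carrier[OF E] .
      have E'V: "E' \<subseteq> V"
      proof
        fix x assume "x \<in> E'"
        then obtain c w where cw: "c \<in> F" "w \<in> E" "x = c \<otimes> a \<oplus> w"
          unfolding E'_def line_extension_mem_iff by auto
        have "c \<otimes> a \<in> V" using subalgebra.smult_closed[OF V cw(1) a(1)] .
        moreover have "w \<in> V" using cw EV by auto
        ultimately show "x \<in> V" using cw(3) subalgebra.axioms(1)[OF V]
          by (simp add: additive_subgroup.a_closed additive_subgroup_def)
      qed
      have EE': "E \<subset> E'"
      proof -
        have "E \<subseteq> E'"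
        proof
          fix w assume "w \<in> E"
          moreover have "w = \<zero> \<otimes> a \<oplus> w" using ac \<open>w \<in> E\<close> Ec by auto
          ultimately show "w \<in> E'" unfolding E'_def line_extension_mem_iff
            using subringE(2)[OF subfieldE(1)[OF F]] by blast
        qed
        moreover have "a \<in> E'"
        proof -
          have "a = \<one> \<otimes> a \<oplus> \<zero>" using ac by simp
          moreover have "\<zero> \<in> E" using subalgebra.axioms(1)[OF E]
            by (simp add: additive_subgroup.zero_closed additive_subgroup_def)
          ultimately show ?thesis unfolding E'_def line_extension_mem_iff
            using subringE(3)[OF subfieldE(1)[OF F]] by blast
        qed
        ultimately show ?thesis using a(2) by blast
      qed
      have "card E < card E'" using psubset_card_mono[OF finite_subset[OF E'V finV] EE'] .
      moreover have "card E' \<le> card V" using card_mono[OF finV E'V] .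
      ultimately have "card V - card E' < k" using k by linarith
      then show ?thesis using less.IH E'sub E'V e' by blast
    qed
  qed
qed

lemma exists_dim:
  assumes F: "subfield F R" and fin: "finite (carrier R)" and V: "subalgebra F V R"
  shows "\<exists>d. dimension d F V"
proof -
  have "subalgebra F {\<zero>} R"
  proof (rule subalgebra.intro)
    show "subgroup {\<zero>} (add_monoid R)"
      using add.triv_subgroup by simp
    show "subalgebra_axioms F {\<zero>} R" unfolding subalgebra_axioms_def
      using subfieldE(3)[OF F] by auto
  qed
  moreover have "{\<zero>} \<subseteq> V" using subalgebra.axioms(1)[OF V]
    by (simp add: additive_subgroup.zero_closed additive_subgroup_def)
  ultimately show ?thesis using exists_dim_aux[OF F fin V] zero_dim by blast
qed

end


lemma translate_translate:
  assumes "ring R" "U \<subseteq> carrier R" "a \<in> carrier R" "b \<in> carrier R"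
  shows "translate R (translate R U a) b = translate R U (a \<otimes>\<^bsub>R\<^esub> b)"
proof -
  interpret ring R by (rule assms(1))
  show ?thesis unfolding translate_def image_image using assms by (auto simp: m_assoc intro!: image_cong)
qed

lemma (in field) main_lemma:
  fixes K :: "'a set" and q n m :: nat
    and Fs :: "'a set list" and ts :: "nat list"
  assumes "True" and "finite (carrier R)"
    and "subfield K R" and "card K = q"
    and "\<exists>p k. prime p \<and> k > 0 \<and> q = p ^ k"
    and "dimension n K (carrier R)"
    and "is_flag R K Fs ts"
    and "m dvd n" and "m \<in> set ts"
    and "real (card (flag_orb R Fs)) = (real q ^ n - 1) / (real q ^ m - 1)"
  shows "m = ts ! 0
    \<and> (\<exists>S. subfield S R \<and> K \<subseteq> S \<and> dimension m K S \<and> orb R (Fs ! 0) = orb R S)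
    \<and> (\<forall>j < length ts. m dvd ts ! j)"
proof -
  note fin = assms(2) and Kf = assms(3)
  have q2: "q \<ge> 2"
  proof -
    obtain p k where pk: "prime p" "k > 0" "q = p ^ k" using assms(5) by blast
    have "p \<ge> 2" using pk(1) prime_ge_2_nat by blast
    moreover have "p \<le> p ^ k" using pk(2) \<open>p \<ge> 2\<close> by (simp add: self_le_power)
    ultimately show ?thesis using pk(3) by linarith
  qed
  have cardR: "card (carrier R) = q ^ n" using dim_card[OF Kf fin assms(6)] assms(4) by simp
  have len: "length Fs = length ts" and ne: "Fs \<noteq> []"
    and sub: "\<And>i. i < length Fs \<Longrightarrow> subalgebra K (Fs!i) R \<and> dimension (ts!i) K (Fs!i)"
    and F0: "{\<zero>} \<subset> Fs!0" and ch: "\<And>i. Suc i < length Fs \<Longrightarrow> Fs!i \<subset> Fs!Suc i"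
    using assms(7) unfolding is_flag_def by auto
  have setFs: "\<And>U. U \<in> set Fs \<Longrightarrow> subalgebra K U R" using sub by (auto simp: in_set_conv_nth)
  have Uc: "\<And>U. U \<in> set Fs \<Longrightarrow> U \<subseteq> carrier R" using setFs subalgebra_in_carrier by blast
  have Ufin: "\<And>U. U \<in> set Fs \<Longrightarrow> finite U" using Uc fin finite_subset by blast
  have Uadd: "additive_subgroup U R" if "U \<in> set Fs" for U
    using subalgebra.axioms(1)[OF setFs[OF that]] by (simp add: additive_subgroup_def)
  have cardF: "\<And>i. i < length Fs \<Longrightarrow> card (Fs!i) = q ^ (ts!i)"
    using dim_card[OF Kf fin] sub assms(4) by blast
  have chain: "\<And>i. i < length Fs \<Longrightarrow> Fs!0 \<subseteq> Fs!i"
  proof -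
    fix i show "i < length Fs \<Longrightarrow> Fs!0 \<subseteq> Fs!i"
    proof (induction i)
      case 0 then show ?case by simp
    next
      case (Suc i) then show ?case using ch[of i] by auto
    qed
  qed
  have F0set: "Fs!0 \<in> set Fs" using ne by simp
  have tpos: "\<And>i. i < length Fs \<Longrightarrow> ts!i \<ge> 1"
  proof -
    fix i assume i: "i < length Fs"
    have "card {\<zero>} < card (Fs!i)"
      using psubset_subset_trans[OF F0 chain[OF i]] psubset_card_mono Ufin i by (meson nth_mem)
    then have "1 < q ^ (ts!i)" using cardF[OF i] by simp
    then show "ts!i \<ge> 1" by (cases "ts!i") auto
  qed
  obtain i0 where i0: "i0 < length ts" "m = ts!i0" using assms(9) by (auto simp: in_set_conv_nth)
  have m1: "m \<ge> 1" using tpos i0 len by auto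

  define S where "S = {g \<in> carrier R. \<forall>U\<in>set Fs. \<forall>u\<in>U. u \<otimes> g \<in> U}"
  have Sc: "S \<subseteq> carrier R" unfolding S_def by auto
  have trans_eq: "\<And>U g. U \<in> set Fs \<Longrightarrow> g \<in> S - {\<zero>} \<Longrightarrow> translate R U g = U"
  proof -
    fix U g assume U: "U \<in> set Fs" and g: "g \<in> S - {\<zero>}"
    have gc: "g \<in> carrier R" using g Sc by auto
    have s1: "translate R U g \<subseteq> U" using g U unfolding S_def translate_def by auto
    have "inj_on (\<lambda>u. u \<otimes> g) U"
      using m_rcancel[of g] g gc Uc[OF U] by (intro inj_onI) auto
    then have "card (translate R U g) = card U" unfolding translate_def by (rule card_image)
    then show "translate R U g = U" using card_subset_eq[OF Ufin[OF U] s1] by simp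
  qed
  have S_subfield: "subfield S R"
  proof (rule subfieldI'[OF subringI])
    show "S \<subseteq> carrier R" by (rule Sc)
    have "u \<otimes> \<one> \<in> U" if "U \<in> set Fs" "u \<in> U" for U u
      using that Uc[OF that(1)] r_one[of u] by auto
    then show "\<one> \<in> S" unfolding S_def by auto
  next
    fix h assume h: "h \<in> S"
    show "\<ominus> h \<in> S" unfolding S_def
    proof (intro CollectI conjI ballI)
      show "\<ominus> h \<in> carrier R" using h Sc by auto
      fix U u assume U: "U \<in> set Fs" and u: "u \<in> U"
      have c: "h \<in> carrier R" "u \<in> carrier R" using h Sc u Uc[OF U] by blast+
      have "u \<otimes> (\<ominus> h) = \<ominus> (u \<otimes> h)" using c by (simp add: r_minus)
      moreover have "u \<otimes> h \<in> U" using h U u unfolding S_def by auto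
      ultimately show "u \<otimes> (\<ominus> h) \<in> U" using additive_subgroup.a_inv_closed[OF Uadd[OF U]] by simp
    qed
  next
    fix h1 h2 assume h: "h1 \<in> S" "h2 \<in> S"
    show "h1 \<otimes> h2 \<in> S" unfolding S_def
    proof (intro CollectI conjI ballI)
      show "h1 \<otimes> h2 \<in> carrier R" using h Sc by auto
      fix U u assume U: "U \<in> set Fs" and u: "u \<in> U"
      have c: "h1 \<in> carrier R" "h2 \<in> carrier R" "u \<in> carrier R" using h Sc u Uc[OF U] by blast+
      have "u \<otimes> (h1 \<otimes> h2) = (u \<otimes> h1) \<otimes> h2" using c by (simp add: m_assoc)
      moreover have "u \<otimes> h1 \<in> U" using h U u unfolding S_def by auto
      ultimately show "u \<otimes> (h1 \<otimes> h2) \<in> U" using h U unfolding S_def by auto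
    qed
    show "h1 \<oplus> h2 \<in> S" unfolding S_def
    proof (intro CollectI conjI ballI)
      show "h1 \<oplus> h2 \<in> carrier R" using h Sc by auto
      fix U u assume U: "U \<in> set Fs" and u: "u \<in> U"
      have c: "h1 \<in> carrier R" "h2 \<in> carrier R" "u \<in> carrier R" using h Sc u Uc[OF U] by blast+
      have "u \<otimes> (h1 \<oplus> h2) = u \<otimes> h1 \<oplus> u \<otimes> h2" using c by (simp add: r_distr)
      moreover have "u \<otimes> h1 \<in> U" "u \<otimes> h2 \<in> U" using h U u unfolding S_def by auto
      ultimately show "u \<otimes> (h1 \<oplus> h2) \<in> U" using additive_subgroup.a_closed[OF Uadd[OF U]] by simp
    qed
  next
    fix k assume k: "k \<in> S - {\<zero>}"
    have kc: "k \<in> carrier R" using k Sc by auto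
    have kU: "k \<in> Units R" using k kc field_Units by auto
    show "inv k \<in> S" unfolding S_def
    proof (intro CollectI conjI ballI)
      show ic: "inv k \<in> carrier R" using kU by simp
      fix U u assume U: "U \<in> set Fs" and u: "u \<in> U"
      have "u \<in> translate R U k" using trans_eq[OF U k] u by simp
      then obtain u' where u': "u' \<in> U" "u = u' \<otimes> k" unfolding translate_def by auto
      have u'c: "u' \<in> carrier R" using u' Uc[OF U] by auto
      have "u \<otimes> inv k = u' \<otimes> (k \<otimes> inv k)" using u' u'c kc ic m_assoc by simp
      also have "\<dots> = u'" using Units_r_inv[OF kU] u'c by simp
      finally show "u \<otimes> inv k \<in> U" using u' by simp
    qed
  qed
  have KS: "K \<subseteq> S"
  proof
    fix k assume k: "k \<in> K"
    have kc: "k \<in> carrier R" using k subfieldE(3)[OF Kf] by auto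
    show "k \<in> S" unfolding S_def
    proof (intro CollectI conjI ballI)
      show "k \<in> carrier R" by (rule kc)
      fix U u assume U: "U \<in> set Fs" and u: "u \<in> U"
      have uc: "u \<in> carrier R" using u Uc[OF U] by blast
      have "u \<otimes> k = k \<otimes> u" using kc uc by (simp add: m_comm)
      then show "u \<otimes> k \<in> U" using subalgebra.smult_closed[OF setFs[OF U] k u] by simp
    qed
  qed
  have S0: "\<zero> \<in> S" using subringE(2)[OF subfieldE(1)[OF S_subfield]] .
  have Sfin: "finite S" using Sc fin finite_subset by blast
  define G where "G = carrier R - {\<zero>}"
  define St where "St = S - {\<zero>}"
  define \<phi> where "\<phi> g = map (\<lambda>U. translate R U g) Fs" for g
  have orbeq: "flag_orb R Fs = \<phi> ` G" unfolding flag_orb_def \<phi>_def G_def by auto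
  have Gfin: "finite G" unfolding G_def using fin by simp
  have fib: "card {y\<in>G. \<phi> y = \<phi> x} = card St" if x: "x \<in> G" for x
  proof -
    have xc: "x \<in> carrier R" "x \<noteq> \<zero>" using x G_def by auto
    have "{y\<in>G. \<phi> y = \<phi> x} = (\<lambda>s. s \<otimes> x) ` St"
    proof (intro equalityI subsetI)
      fix y assume "y \<in> {y\<in>G. \<phi> y = \<phi> x}"
      then have y: "y \<in> carrier R" "y \<noteq> \<zero>" and eq: "\<phi> y = \<phi> x" unfolding G_def by auto
      have xU: "x \<in> Units R" "inv x \<in> carrier R" using xc field_Units by auto
      define s where "s = y \<otimes> inv x"
      have sc: "s \<in> carrier R" unfolding s_def using y xU by simp
      have ys: "y = s \<otimes> x" unfolding s_def using y xU Units_l_inv[OF xU(1)] xc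
        by (simp add: m_assoc)
      have s0: "s \<noteq> \<zero>" using ys y xc sc by auto
      have "s \<in> S" unfolding S_def
      proof (intro CollectI conjI ballI)
        show "s \<in> carrier R" by (rule sc)
        fix U u assume U: "U \<in> set Fs" and u: "u \<in> U"
        have uc: "u \<in> carrier R" using u Uc[OF U] by blast
        have "translate R U y = translate R U x" using eq U unfolding \<phi>_def by (simp add: map_eq_conv)
        moreover have "u \<otimes> y \<in> translate R U y" using u unfolding translate_def by auto
        ultimately obtain u' where u': "u' \<in> U" "u \<otimes> y = u' \<otimes> x" unfolding translate_def by auto
        have u'c: "u' \<in> carrier R" using u' Uc[OF U] by blast
        have "u \<otimes> s = (u \<otimes> y) \<otimes> inv x" unfolding s_def using uc y xU by (simp add: m_assoc)
        also have "\<dots> = u' \<otimes> (x \<otimes> inv x)" using u' u'c xc xU by (simp add: m_assoc)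
        also have "\<dots> = u'" using Units_r_inv[OF xU(1)] u'c by simp
        finally show "u \<otimes> s \<in> U" using u' by simp
      qed
      then show "y \<in> (\<lambda>s. s \<otimes> x) ` St" using ys s0 unfolding St_def by auto
    next
      fix y assume "y \<in> (\<lambda>s. s \<otimes> x) ` St"
      then obtain s where s: "s \<in> S - {\<zero>}" "y = s \<otimes> x" unfolding St_def by auto
      have sc: "s \<in> carrier R" using s Sc by blast
      have yG: "y \<in> G" using s sc xc integral[of s x] unfolding G_def by auto
      have "translate R U y = translate R U x" if U: "U \<in> set Fs" for U
        using translate_translate[OF ring_axioms Uc[OF U] sc xc(1)] trans_eq[OF U s(1)] s(2) by simp
      then have "\<phi> y = \<phi> x" unfolding \<phi>_def by simp
      then show "y \<in> {y\<in>G. \<phi> y = \<phi> x}" using yG by simp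
    qed
    moreover have "inj_on (\<lambda>s. s \<otimes> x) St"
    proof (rule inj_onI)
      fix a b assume "a \<in> St" "b \<in> St" "a \<otimes> x = b \<otimes> x"
      then show "a = b" using m_rcancel[of x a b] xc Sc unfolding St_def by blast
    qed
    ultimately show ?thesis by (simp add: card_image)
  qed
  have count: "card G = card (flag_orb R Fs) * card St"
    unfolding orbeq by (rule fiber_count[OF Gfin fib])
  have cardG: "card G = q ^ n - 1" unfolding G_def using cardR fin by (simp add: card_Diff_singleton)
  have cardSt: "card St = card S - 1" unfolding St_def using S0 Sfin by (simp add: card_Diff_singleton)
  have qm: "real q ^ m - 1 > 0" using q2 m1
    by (metis diff_gt_0_iff_gt less_1_mult numeral_le_real_of_nat_iff one_less_numeral_iff
        one_less_power order_less_le_trans semiring_norm(76) linorder_not_le less_numeral_extra(4) zero_less_one)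
  have Npos: "card (flag_orb R Fs) > 0"
  proof -
    have "\<one> \<in> G" unfolding G_def by simp
    then have "flag_orb R Fs \<noteq> {}" unfolding orbeq by auto
    moreover have "finite (flag_orb R Fs)" unfolding orbeq using Gfin by simp
    ultimately show ?thesis by (simp add: card_gt_0_iff)
  qed
  have qn1: "q ^ n \<ge> 1" using q2 by simp
  have "real (card (flag_orb R Fs)) * real (card St) = real q ^ n - 1"
  proof -
    have "real (card (flag_orb R Fs) * card St) = real (q ^ n - 1)" using count cardG by simp
    then show ?thesis using qn1 by (simp add: of_nat_diff)
  qed
  moreover have "real (card (flag_orb R Fs)) * (real q ^ m - 1) = real q ^ n - 1"
    using assms(10) qm by (simp add: field_simps)
  ultimately have e: "real (card (flag_orb R Fs)) * real (card St) = real (card (flag_orb R Fs)) * (real q ^ m - 1)"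
    by simp
  have Nne: "real (card (flag_orb R Fs)) \<noteq> 0" using Npos by simp
  have stq: "real (card St) = real q ^ m - 1" using e Nne by simp
  have "card S > 0" using S0 Sfin card_gt_0_iff by blast
  then have "card S = card St + 1" using cardSt by simp
  then have "real (card S) = real (q ^ m)" using stq by simp
  then have cardS: "card S = q ^ m" by (simp only: of_nat_eq_iff)
  have q1: "1 < q" using q2 by simp

  have dvdj: "m dvd ts ! j" if j: "j < length ts" for j
  proof -
    have jF: "j < length Fs" using j len by simp
    have U: "Fs!j \<in> set Fs" using jF by simp
    have "subalgebra S (Fs!j) R"
    proof (rule subalgebra.intro)
      show "subgroup (Fs!j) (add_monoid R)" using subalgebra.axioms(1)[OF setFs[OF U]] .
      have aux: "k \<otimes> v \<in> Fs!j" if kv: "k \<in> S" "v \<in> Fs!j" for k v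
      proof -
        have c: "k \<in> carrier R" "v \<in> carrier R" using kv Sc Uc[OF U] by blast+
        have "v \<otimes> k \<in> Fs!j" using kv U unfolding S_def by blast
        then show "k \<otimes> v \<in> Fs!j" using c by (simp add: m_comm)
      qed
      show "subalgebra_axioms S (Fs!j) R" by (rule subalgebra_axioms.intro) (rule aux)
    qed
    then obtain d where d: "dimension d S (Fs!j)" using exists_dim[OF S_subfield fin] by blast
    have "q ^ (ts!j) = q ^ (m * d)" using dim_card[OF S_subfield fin d] cardS cardF[OF jF]
      by (simp add: power_mult)
    then have "ts!j = m * d" using q1 power_inject_exp by blast
    then show ?thesis by simp
  qed
  have mt0: "m = ts!0"
  proof -
    have "0 < length Fs" using ne by simp
    then have "0 < length ts" using len by linarith
    then have "m dvd ts!0" by (rule dvdj)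
    moreover have "ts!0 \<ge> 1" using tpos ne by auto
    ultimately have "m \<le> ts!0" by (simp add: dvd_imp_le)
    moreover have "ts!0 \<le> m"
    proof -
      have i0F: "i0 < length Fs" using i0 len by simp
      have "card (Fs!0) \<le> card (Fs!i0)" using card_mono[OF Ufin chain[OF i0F]] i0F by simp
      then have "q ^ (ts!0) \<le> q ^ (ts!i0)" using cardF[OF i0F] cardF ne by simp
      then show ?thesis using i0 q1 by (simp add: power_increasing_iff)
    qed
    ultimately show ?thesis by simp
  qed
  have SK: "subalgebra K S R"
  proof (rule subalgebra.intro)
    show "subgroup S (add_monoid R)" using subring.axioms(1)[OF subfieldE(1)[OF S_subfield]] .
    show "subalgebra_axioms K S R" unfolding subalgebra_axioms_def
      using KS subringE(6)[OF subfieldE(1)[OF S_subfield]] by blast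
  qed
  obtain d where d: "dimension d K S" using exists_dim[OF Kf fin SK] by blast
  have "q ^ d = q ^ m" using dim_card[OF Kf fin d] assms(4) cardS by simp
  then have dimS: "dimension m K S" using d q1 power_inject_exp by metis
  obtain u where u: "u \<in> Fs!0" "u \<noteq> \<zero>" using F0 by blast
  have uc: "u \<in> carrier R" using u Uc[OF F0set] by blast
  have F0eq: "Fs!0 = translate R S u"
  proof -
    have sub1: "translate R S u \<subseteq> Fs!0"
    proof
      fix x assume "x \<in> translate R S u"
      then obtain s where s: "s \<in> S" "x = s \<otimes> u" unfolding translate_def by auto
      have sc: "s \<in> carrier R" using s Sc by blast
      have "u \<otimes> s \<in> Fs!0" using s u F0set unfolding S_def by blast
      then show "x \<in> Fs!0" using s sc uc by (simp add: m_comm)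
    qed
    have "inj_on (\<lambda>s. s \<otimes> u) S"
    proof (rule inj_onI)
      fix a b assume "a \<in> S" "b \<in> S" "a \<otimes> u = b \<otimes> u"
      then show "a = b" using m_rcancel[of u a b] u uc Sc by blast
    qed
    then have "card (translate R S u) = card S" unfolding translate_def by (rule card_image)
    also have "\<dots> = card (Fs!0)" using cardS cardF[of 0] ne mt0 by simp
    finally show ?thesis using card_subset_eq[OF Ufin[OF F0set] sub1] by simp
  qed
  have orbeq2: "orb R (Fs!0) = orb R S"
  proof -
    have uU: "u \<in> Units R" "inv u \<in> carrier R" using u uc field_Units by auto
    show ?thesis unfolding orb_def F0eq
    proof (intro equalityI subsetI)
      fix X assume "X \<in> {translate R (translate R S u) \<gamma> |\<gamma>. \<gamma> \<in> carrier R - {\<zero>}}"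
      then obtain g where g: "g \<in> carrier R" "g \<noteq> \<zero>" "X = translate R (translate R S u) g" by auto
      have "X = translate R S (u \<otimes> g)" using g translate_translate[OF ring_axioms Sc uc g(1)] by simp
      moreover have "u \<otimes> g \<in> carrier R - {\<zero>}" using g u uc integral[of u g] by auto
      ultimately show "X \<in> {translate R S \<gamma> |\<gamma>. \<gamma> \<in> carrier R - {\<zero>}}" by blast
    next
      fix X assume "X \<in> {translate R S \<gamma> |\<gamma>. \<gamma> \<in> carrier R - {\<zero>}}"
      then obtain g where g: "g \<in> carrier R" "g \<noteq> \<zero>" "X = translate R S g" by auto
      have ig: "inv u \<otimes> g \<in> carrier R" using uU g by simp
      have "u \<otimes> (inv u \<otimes> g) = g" using uU g uc Units_r_inv[OF uU(1)] by (simp add: m_assoc[symmetric])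
      then have "X = translate R (translate R S u) (inv u \<otimes> g)"
        using g translate_translate[OF ring_axioms Sc uc ig] by simp
      moreover have "inv u \<otimes> g \<noteq> \<zero>" using \<open>u \<otimes> (inv u \<otimes> g) = g\<close> g uc by auto
      ultimately show "X \<in> {translate R (translate R S u) \<gamma> |\<gamma>. \<gamma> \<in> carrier R - {\<zero>}}"
        using ig by blast
    qed
  qed
  show ?thesis using mt0 S_subfield KS dimS orbeq2 dvdj by blast
qed

theorem corollary3p11:
  fixes R :: "('a, 'b) ring_scheme" and K :: "'a set" and q n m :: nat
    and Fs :: "'a set list" and ts :: "nat list"
  assumes "field R" and "finite (carrier R)"
    and "subfield K R" and "card K = q"
    and "\<exists>p k. prime p \<and> k > 0 \<and> q = p ^ k"
    and "ring.dimension R n K (carrier R)"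
    and "is_flag R K Fs ts"
    and "m dvd n" and "m \<in> set ts"
    and "real (card (flag_orb R Fs)) = (real q ^ n - 1) / (real q ^ m - 1)"
  shows "m = ts ! 0
    \<and> (\<exists>S. subfield S R \<and> K \<subseteq> S \<and> ring.dimension R m K S \<and> orb R (Fs ! 0) = orb R S)
    \<and> (\<forall>j < length ts. m dvd ts ! j)"
  by (rule field.main_lemma[OF assms(1) TrueI assms(2-10)])

end
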